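(* Let $X$ be a uniform space and let $(\mu_i)_{i\in I}$ be a net of Borel probability measures on $X$ which concentrates in $X$. Let $H$ be a uniformly equicontinuous, norm-bounded set of bounded uniformly continuous real-valued functions on $X$, and let $\epsilon>0$. Then $$\sup_{f\in H}\mu_i\bigl(\{x\in X : |f(x)-\mathbb E_{\mu_i}(f)|>\epsilon\}\bigr)\to 0 .$$
   Context: For an entourage $U$ of $X$ and $A\subseteq X$, $U[A]=\{y\in X:\exists x\in A,\ (x,y)\in U\}$. A net $(\mu_i)_{i\in I}$ of Borel probability measures on $X$ concentrates in $X$ if, whenever $(A_i)_{i\in I}$ are Borel subsets of $X$ with $\liminf_{i}\mu_i(A_i)>0$, one has $\lim_i\mu_i(U[A_i])=1$ for every open entourage $U$ of $X$. $\mathbb E_{\mu}(f)=\int f\,d\mu$. *)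

theory Defs
  imports "HOL-Probability.Probability"
begin

text \<open>Nets: indexed by a directed preordered type; "eventually along the net" is the
  filter generated by the tails.\<close>
definition directed :: "('i::preorder) itself \<Rightarrow> bool" where
  "directed _ \<longleftrightarrow> (\<forall>a b::'i. \<exists>c. a \<le> c \<and> b \<le> c)"

definition net_filter :: "('i::preorder) filter" where
  "net_filter = (INF k. principal {k..})"

definition entourage :: "('a::uniform_space \<times> 'a) set \<Rightarrow> bool" where
  "entourage U \<longleftrightarrow> eventually (\<lambda>p. p \<in> U) uniformity"

definition ent_image :: "('a \<times> 'a) set \<Rightarrow> 'a set \<Rightarrow> 'a set" where
  "ent_image U A = {y. \<exists>x\<in>A. (x, y) \<in> U}"

definition concentrates :: "('i::preorder \<Rightarrow> 'a::uniform_space measure) \<Rightarrow> bool" where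
  "concentrates \<mu> \<longleftrightarrow>
     (\<forall>A :: 'i \<Rightarrow> 'a set. (\<forall>i. A i \<in> sets borel) \<and>
        Liminf net_filter (\<lambda>i. ereal (measure (\<mu> i) (A i))) > 0 \<longrightarrow>
        (\<forall>U. open U \<and> entourage U \<longrightarrow>
           ((\<lambda>i. measure (\<mu> i) (ent_image U (A i))) \<longlongrightarrow> 1) net_filter))"

definition uniformly_equicontinuous :: "('a::uniform_space \<Rightarrow> real) set \<Rightarrow> bool" where
  "uniformly_equicontinuous H \<longleftrightarrow>
     (\<forall>e>0. \<exists>U. entourage U \<and> (\<forall>f\<in>H. \<forall>x y. (x, y) \<in> U \<longrightarrow> \<bar>f x - f y\<bar> < e))"

end

theory Submission imports Defs begin

lemma nbhd_ent:
  fixes x :: "'a::uniform_space"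
  assumes "eventually E uniformity"
  shows "\<exists>S. open S \<and> x \<in> S \<and> (\<forall>z\<in>S. E (x, z))"
proof -
  have "eventually (\<lambda>(x', y). x' = x \<longrightarrow> E (x, y)) uniformity"
    using assms by (rule eventually_mono) auto
  then have "eventually (\<lambda>z. E (x, z)) (nhds x)"
    by (simp add: eventually_nhds_uniformity)
  then show ?thesis by (simp add: eventually_nhds)
qed

lemma open_entourage:
  fixes W :: "('a::uniform_space \<times> 'a) set"
  assumes "entourage W"
  shows "\<exists>U. open U \<and> entourage U \<and> U \<subseteq> W"
proof -
  have W: "eventually (\<lambda>p. p \<in> W) uniformity" using assms by (simp add: entourage_def)
  obtain D1 where D1: "eventually D1 uniformity" "\<And>x y z. D1 (x, y) \<Longrightarrow> D1 (y, z) \<Longrightarrow> (x, z) \<in> W"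
    using uniformity_transE[OF W] by blast
  obtain D2 where D2: "eventually D2 uniformity" "\<And>x y z. D2 (x, y) \<Longrightarrow> D2 (y, z) \<Longrightarrow> D1 (x, z)"
    using uniformity_transE[OF D1(1)] by blast
  define V where "V = (\<lambda>p. D2 p \<and> D2 (prod.swap p))"
  have "eventually (\<lambda>(x, y). D2 (y, x)) uniformity" using uniformity_sym[OF D2(1)] .
  then have V: "eventually V uniformity"
    using D2(1) unfolding V_def by (rule eventually_elim2) auto
  have "\<forall>x. \<exists>S. open S \<and> x \<in> S \<and> (\<forall>z\<in>S. V (x, z))"
    using nbhd_ent[OF V] by blast
  then obtain S where S: "\<And>x. open (S x)" "\<And>x. x \<in> S x" "\<And>x z. z \<in> S x \<Longrightarrow> V (x, z)"
    by metis
  define U where "U = {(a, b). \<exists>x y. V (x, y) \<and> a \<in> S x \<and> b \<in> S y}"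
  have "open U"
    unfolding open_prod_def
  proof
    fix p assume "p \<in> U"
    then obtain a b x y where p: "p = (a, b)" "V (x, y)" "a \<in> S x" "b \<in> S y"
      unfolding U_def by blast
    show "\<exists>A B. open A \<and> open B \<and> p \<in> A \<times> B \<and> A \<times> B \<subseteq> U"
      by (rule exI[of _ "S x"], rule exI[of _ "S y"]) (use p S in \<open>auto simp: U_def\<close>)
  qed
  moreover have "entourage U"
    unfolding entourage_def using V
    by (rule eventually_mono) (use S(2) in \<open>auto simp: U_def\<close>)
  moreover have "U \<subseteq> W"
  proof
    fix p assume "p \<in> U"
    then obtain a b x y where p: "p = (a, b)" "V (x, y)" "a \<in> S x" "b \<in> S y"
      unfolding U_def by blast
    have "V (x, a)" "V (y, b)" using S(3) p by auto
    then have "D2 (a, x)" "D2 (x, y)" "D2 (y, b)" "D2 (b, b)"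
      using p(2) uniformity_refl[OF D2(1)] by (auto simp: V_def)
    then have "D1 (a, y)" "D1 (y, b)" using D2(2) by blast+
    then show "p \<in> W" using D1(2) p by blast
  qed
  ultimately show ?thesis by blast
qed

lemma conc_seq:
  fixes \<mu> :: "'i::preorder \<Rightarrow> 'a::uniform_space measure" and g :: "'i \<Rightarrow> 'a \<Rightarrow> real"
  assumes prob: "\<And>i. prob_space (\<mu> i)" and sets: "\<And>i. sets (\<mu> i) = sets borel"
    and conc: "concentrates \<mu>"
    and cont: "\<And>i. continuous_on UNIV (g i)"
    and W: "entourage W" and Wg: "\<And>i x y. (x, y) \<in> W \<Longrightarrow> \<bar>g i x - g i y\<bar> < e"
    and C: "\<And>i x. \<bar>g i x\<bar> \<le> C"
    and e: "e > 0"
  shows "((\<lambda>i. measure (\<mu> i) {x. \<bar>g i x - integral\<^sup>L (\<mu> i) (g i)\<bar> > 5 * e}) \<longlongrightarrow> 0) net_filter"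
proof -
  have C0: "C \<ge> 0" using C[of undefined undefined] by linarith
  have sp: "\<And>i. space (\<mu> i) = UNIV"
    using sets_eq_imp_space_eq[OF sets] by simp
  have mc: "\<And>i. borel_measurable (\<mu> i) = borel_measurable borel"
    by (rule measurable_cong_sets[OF sets refl])
  have gm: "\<And>i. g i \<in> borel_measurable borel"
    using cont by (rule borel_measurable_continuous_onI)
  define K :: nat where "K = nat \<lceil>2 * C / e\<rceil>"
  have K: "real K * e \<le> 2 * C + e"
  proof -
    have "real K \<le> 2 * C / e + 1"
      
    proof -
      have "0 \<le> 2 * C / e" using C0 e by simp
      then have "0 \<le> \<lceil>2 * C / e\<rceil>" by simp
      then have "real (nat \<lceil>2 * C / e\<rceil>) = of_int \<lceil>2 * C / e\<rceil>" by simp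
      also have "\<dots> \<le> 2 * C / e + 1" by (rule of_int_ceiling_le_add_one)
      finally show ?thesis by (simp add: K_def)
    qed
    then have "real K * e \<le> (2 * C / e + 1) * e" using e by (simp add: mult_right_mono)
    also have "\<dots> = 2 * C + e" using e by (simp add: field_simps)
    finally show ?thesis .
  qed
  define A where "A = (\<lambda>i (j::nat). {x. \<bar>g i x - (- C + real j * e)\<bar> \<le> e})"
  have Aclosed: "\<And>i j. closed (A i j)"
    unfolding A_def by (intro closed_Collect_le continuous_intros cont)
  have cover: "\<And>i x. \<exists>j\<le>K. x \<in> A i j"
  proof -
    fix i x
    define j where "j = nat \<lfloor>(g i x + C) / e\<rfloor>"
    have g1: "(g i x + C) / e \<ge> 0" using C[of i x] e by auto
    have "real j \<le> (g i x + C) / e" "(g i x + C) / e < real j + 1"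
      unfolding j_def using g1 by (auto simp: of_nat_nat)
    then have "real j * e \<le> g i x + C" "g i x + C < real j * e + e"
      using e by (auto simp: field_simps)
    moreover have "j \<le> K" unfolding j_def K_def
      using C[of i x] e by (intro nat_mono floor_le_ceiling[THEN order_trans]) (auto intro!: ceiling_mono divide_right_mono)
    ultimately show "\<exists>j\<le>K. x \<in> A i j" unfolding A_def by (intro exI[of _ j]) auto
  qed
  have "\<forall>i. \<exists>j\<le>K. measure (\<mu> i) (A i j) \<ge> 1 / (real K + 1)"
  proof
    fix i
    interpret prob_space "\<mu> i" by (rule prob)
    show "\<exists>j\<le>K. measure (\<mu> i) (A i j) \<ge> 1 / (real K + 1)"
    proof (rule ccontr)
      assume "\<not> ?thesis"
      then have lt: "\<And>j. j \<in> {..K} \<Longrightarrow> measure (\<mu> i) (A i j) < 1 / (real K + 1)" by auto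
      have "UNIV = (\<Union>j\<in>{..K}. A i j)" using cover by blast
      then have "1 = measure (\<mu> i) (\<Union>j\<in>{..K}. A i j)" using prob_space sp by simp
      also have "\<dots> \<le> (\<Sum>j\<in>{..K}. measure (\<mu> i) (A i j))"
        by (rule measure_UNION_le) (auto simp: sets Aclosed)
      also have "\<dots> < (\<Sum>j\<in>{..K}. 1 / (real K + 1))"
        by (rule sum_strict_mono) (auto intro: lt)
      also have "\<dots> = 1" by simp
      finally show False by simp
    qed
  qed
  then obtain J where J: "\<And>i. J i \<le> K" "\<And>i. measure (\<mu> i) (A i (J i)) \<ge> 1 / (real K + 1)"
    by metis
  define a where "a = (\<lambda>i. - C + real (J i) * e)"
  have a_bd: "\<And>i. \<bar>a i\<bar> \<le> C + e"
  proof -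
    fix i
    have "real (J i) * e \<le> real K * e" using J(1)[of i] e by (simp add: mult_right_mono)
    moreover have "0 \<le> real (J i) * e" using e by simp
    ultimately show "\<bar>a i\<bar> \<le> C + e" using K C0 e unfolding a_def abs_le_iff by linarith
  qed
  define A' where "A' = (\<lambda>i. A i (J i))"
  have A'sets: "\<And>i. A' i \<in> sets borel" unfolding A'_def using Aclosed by simp
  have "ereal (1 / (real K + 1)) \<le> Liminf net_filter (\<lambda>i. ereal (measure (\<mu> i) (A' i)))"
    by (rule Liminf_bounded) (use J(2) in \<open>auto simp: A'_def\<close>)
  then have lim: "Liminf net_filter (\<lambda>i. ereal (measure (\<mu> i) (A' i))) > 0"
    by (rule less_le_trans[rotated]) auto
  obtain U where U: "open U" "entourage U" "U \<subseteq> W" using open_entourage[OF W] by blast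
  have t1: "((\<lambda>i. measure (\<mu> i) (ent_image U (A' i))) \<longlongrightarrow> 1) net_filter"
    using conc lim A'sets U unfolding concentrates_def by blast
  define G where "G = (\<lambda>i. {x. \<bar>g i x - a i\<bar> < 2 * e})"
  have Gsets: "\<And>i. G i \<in> sets borel"
    unfolding G_def by (intro borel_open open_Collect_less continuous_intros cont)
  have sub: "\<And>i. ent_image U (A' i) \<subseteq> G i"
  proof
    fix i y assume "y \<in> ent_image U (A' i)"
    then obtain x where x: "x \<in> A' i" "(x, y) \<in> U" unfolding ent_image_def by blast
    then have "\<bar>g i x - g i y\<bar> < e" using U(3) Wg by blast
    then show "y \<in> G i" using x(1) unfolding A'_def A_def G_def a_def by auto
  qed
  have mG: "\<And>i. measure (\<mu> i) (ent_image U (A' i)) \<le> measure (\<mu> i) (G i) \<and> measure (\<mu> i) (G i) \<le> 1"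
  proof -
    fix i
    interpret prob_space "\<mu> i" by (rule prob)
    have "measure (\<mu> i) (ent_image U (A' i)) \<le> measure (\<mu> i) (G i)"
    proof (cases "ent_image U (A' i) \<in> sets (\<mu> i)")
      case True then show ?thesis using sub Gsets sets by (intro finite_measure_mono) auto
    next
      case False then show ?thesis by (simp add: measure_notin_sets)
    qed
    then show "?thesis i" by simp
  qed
  have tG: "((\<lambda>i. measure (\<mu> i) (G i)) \<longlongrightarrow> 1) net_filter"
    by (rule tendsto_sandwich[OF _ _ t1 tendsto_const]) (use mG in auto)
  define p where "p = (\<lambda>i. measure (\<mu> i) (UNIV - G i))"
  have p_eq: "\<And>i. p i = 1 - measure (\<mu> i) (G i)"
  proof -
    fix i
    interpret prob_space "\<mu> i" by (rule prob)
    show "p i = 1 - measure (\<mu> i) (G i)"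
      unfolding p_def using prob_compl[of "G i"] sp Gsets sets by simp
  qed
  have tp: "(p \<longlongrightarrow> 0) net_filter"
    unfolding p_eq using tendsto_diff[OF tendsto_const tG, of 1] by simp
  define D where "D = 2 * C + e"
  have D0: "D \<ge> 0" using C0 e by (simp add: D_def)
  have intb: "\<And>i. \<bar>integral\<^sup>L (\<mu> i) (g i) - a i\<bar> \<le> 2 * e + D * p i"
  proof -
    fix i
    interpret prob_space "\<mu> i" by (rule prob)
    have gmi: "g i \<in> borel_measurable (\<mu> i)" unfolding mc[of i] by (rule gm)
    have ig: "integrable (\<mu> i) (g i)"
      by (rule integrable_const_bound[where B=C]) (use C gmi in auto)
    have Gc: "UNIV - G i \<in> sets (\<mu> i)" using Gsets sets by auto
    have ii: "integrable (\<mu> i) (indicator (UNIV - G i) :: 'a \<Rightarrow> real)"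
      using Gc by (simp add: emeasure_eq_measure)
    have h1: "integral\<^sup>L (\<mu> i) (\<lambda>x. g i x - a i) = integral\<^sup>L (\<mu> i) (g i) - a i"
      using ig by (simp add: prob_space)
    have "\<bar>integral\<^sup>L (\<mu> i) (\<lambda>x. g i x - a i)\<bar> \<le> integral\<^sup>L (\<mu> i) (\<lambda>x. \<bar>g i x - a i\<bar>)"
      by (rule integral_abs_bound)
    also have "\<dots> \<le> integral\<^sup>L (\<mu> i) (\<lambda>x. 2 * e + D * indicator (UNIV - G i) x)"
    proof (rule integral_mono)
      show "integrable (\<mu> i) (\<lambda>x. \<bar>g i x - a i\<bar>)" using ig by auto
      show "integrable (\<mu> i) (\<lambda>x. 2 * e + D * indicator (UNIV - G i) x)" using ii by auto
      fix x
      have "\<bar>g i x - a i\<bar> \<le> D" using C[of i x] a_bd[of i] unfolding D_def by (auto simp: abs_le_iff)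
      then show "\<bar>g i x - a i\<bar> \<le> 2 * e + D * indicator (UNIV - G i) x"
        using e by (cases "x \<in> G i") (auto simp: G_def)
    qed
    also have "\<dots> = 2 * e + D * p i"
      using ii by (simp add: prob_space p_def Gc)
    finally show "\<bar>integral\<^sup>L (\<mu> i) (g i) - a i\<bar> \<le> 2 * e + D * p i" using h1 by simp
  qed
  have "((\<lambda>i. D * p i) \<longlongrightarrow> 0) net_filter"
    using tendsto_mult[OF tendsto_const tp, of D] by simp
  then have ev: "eventually (\<lambda>i. D * p i < e) net_filter"
    using e by (rule order_tendstoD)
  have bnd: "eventually (\<lambda>i. measure (\<mu> i) {x. \<bar>g i x - integral\<^sup>L (\<mu> i) (g i)\<bar> > 5 * e} \<le> p i) net_filter"
    using ev
  proof (rule eventually_mono)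
    fix i assume lt: "D * p i < e"
    interpret prob_space "\<mu> i" by (rule prob)
    have "{x. \<bar>g i x - integral\<^sup>L (\<mu> i) (g i)\<bar> > 5 * e} \<subseteq> UNIV - G i"
    proof
      fix x assume x: "x \<in> {x. \<bar>g i x - integral\<^sup>L (\<mu> i) (g i)\<bar> > 5 * e}"
      have "x \<notin> G i"
      proof
        assume "x \<in> G i"
        then have "\<bar>g i x - a i\<bar> < 2 * e" by (simp add: G_def)
        with intb[of i] lt x show False by (auto simp add: abs_le_iff abs_less_iff)
      qed
      then show "x \<in> UNIV - G i" by simp
    qed
    then show "measure (\<mu> i) {x. \<bar>g i x - integral\<^sup>L (\<mu> i) (g i)\<bar> > 5 * e} \<le> p i"
      unfolding p_def using Gsets sets by (intro finite_measure_mono) auto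
  qed
  show ?thesis
    by (rule tendsto_sandwich[OF _ bnd tendsto_const tp]) auto
qed

theorem corollary3p7:
  fixes \<mu> :: "'i::preorder \<Rightarrow> 'a::uniform_space measure"
    and H :: "('a \<Rightarrow> real) set" and \<epsilon> :: real
  assumes "directed TYPE('i)"
    and "\<And>i. prob_space (\<mu> i)"
    and "\<And>i. sets (\<mu> i) = sets borel"
    and "concentrates \<mu>"
    and "\<And>f. f \<in> H \<Longrightarrow> uniformly_continuous_on UNIV f"
    and "\<And>f. f \<in> H \<Longrightarrow> bounded (range f)"
    and "uniformly_equicontinuous H"
    and "\<exists>C. \<forall>f\<in>H. \<forall>x. \<bar>f x\<bar> \<le> C"
    and "\<epsilon> > 0"
  shows "((\<lambda>i. SUP f\<in>H. emeasure (\<mu> i) {x. \<bar>f x - integral\<^sup>L (\<mu> i) f\<bar> > \<epsilon>}) \<longlongrightarrow> 0)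
           net_filter"
proof (cases "H = {}")
  case True
  then show ?thesis by (simp add: bot_ennreal)
next
  case False
  then obtain f0 where f0: "f0 \<in> H" by blast
  note prob = assms(2) and sets = assms(3) and conc = assms(4)
  obtain C where C: "\<And>f x. f \<in> H \<Longrightarrow> \<bar>f x\<bar> \<le> C" using assms(8) by blast
  define e where "e = \<epsilon> / 5"
  have e: "e > 0" using assms(9) by (simp add: e_def)
  obtain W where W: "entourage W" and Wf: "\<And>f x y. f \<in> H \<Longrightarrow> (x, y) \<in> W \<Longrightarrow> \<bar>f x - f y\<bar> < e"
    using assms(7) e unfolding uniformly_equicontinuous_def by blast
  define bad where "bad = (\<lambda>i f. {x. \<bar>f x - integral\<^sup>L (\<mu> i) f\<bar> > \<epsilon>})"
  show ?thesis
  proof (rule order_tendstoI)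
    fix y :: ennreal assume "y < 0" then show "eventually (\<lambda>i. y < (SUP f\<in>H. emeasure (\<mu> i) {x. \<bar>f x - integral\<^sup>L (\<mu> i) f\<bar> > \<epsilon>})) net_filter"
      by simp
  next
    fix y :: ennreal assume y: "0 < y"
    obtain b where b: "0 < b" "b < y" using dense[OF y] by blast
    define \<delta> where "\<delta> = enn2real b"
    have bt: "b < top" using b(2) top.not_eq_extremum by fastforce
    have \<delta>b: "ennreal \<delta> = b" unfolding \<delta>_def using bt by simp
    have \<delta>0: "\<delta> > 0" unfolding \<delta>_def using b(1) bt by (simp add: enn2real_positive_iff)
    define g where "g = (\<lambda>i. if \<exists>f\<in>H. measure (\<mu> i) (bad i f) > \<delta>
       then SOME f. f \<in> H \<and> measure (\<mu> i) (bad i f) > \<delta> else f0)"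
    have gH: "\<And>i. g i \<in> H"
    proof -
      fix i
      show "g i \<in> H"
      proof (cases "\<exists>f\<in>H. measure (\<mu> i) (bad i f) > \<delta>")
        case True
        then have ex: "\<exists>f. f \<in> H \<and> measure (\<mu> i) (bad i f) > \<delta>" by blast
        have "g i = (SOME f. f \<in> H \<and> measure (\<mu> i) (bad i f) > \<delta>)" unfolding g_def using True by simp
        then show ?thesis using someI_ex[OF ex] by simp
      next
        case False
        then show ?thesis unfolding g_def using f0 by simp
      qed
    qed
    have gbad: "\<And>i f. f \<in> H \<Longrightarrow> measure (\<mu> i) (bad i f) > \<delta> \<Longrightarrow> measure (\<mu> i) (bad i (g i)) > \<delta>"
    proof -
      fix i f assume "f \<in> H" "measure (\<mu> i) (bad i f) > \<delta>"
      then have ex: "\<exists>f. f \<in> H \<and> measure (\<mu> i) (bad i f) > \<delta>" by blast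
      have "g i = (SOME f. f \<in> H \<and> measure (\<mu> i) (bad i f) > \<delta>)" unfolding g_def using ex by auto
      then show "measure (\<mu> i) (bad i (g i)) > \<delta>" using someI_ex[OF ex] by simp
    qed
    have "((\<lambda>i. measure (\<mu> i) {x. \<bar>g i x - integral\<^sup>L (\<mu> i) (g i)\<bar> > 5 * e}) \<longlongrightarrow> 0) net_filter"
    proof (rule conc_seq[OF prob sets conc _ W])
      show "\<And>i. continuous_on UNIV (g i)" by (rule uniformly_continuous_imp_continuous[OF assms(5)[OF gH]])
      show "\<And>i x y. (x, y) \<in> W \<Longrightarrow> \<bar>g i x - g i y\<bar> < e" by (rule Wf[OF gH])
      show "\<And>i x. \<bar>g i x\<bar> \<le> C" by (rule C[OF gH])
    qed (rule e)
    then have "((\<lambda>i. measure (\<mu> i) (bad i (g i))) \<longlongrightarrow> 0) net_filter"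
      by (simp add: bad_def e_def)
    then have "eventually (\<lambda>i. measure (\<mu> i) (bad i (g i)) < \<delta>) net_filter"
      using \<delta>0 by (rule order_tendstoD)
    then show "eventually (\<lambda>i. (SUP f\<in>H. emeasure (\<mu> i) {x. \<bar>f x - integral\<^sup>L (\<mu> i) f\<bar> > \<epsilon>}) < y) net_filter"
    proof (rule eventually_mono)
      fix i assume lt: "measure (\<mu> i) (bad i (g i)) < \<delta>"
      interpret prob_space "\<mu> i" by (rule prob)
      have "(SUP f\<in>H. emeasure (\<mu> i) {x. \<bar>f x - integral\<^sup>L (\<mu> i) f\<bar> > \<epsilon>}) \<le> ennreal \<delta>"
      proof (rule SUP_least)
        fix f assume f: "f \<in> H"
        have "measure (\<mu> i) (bad i f) \<le> \<delta>" using gbad[OF f, of i] lt by linarith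
        then show "emeasure (\<mu> i) {x. \<bar>f x - integral\<^sup>L (\<mu> i) f\<bar> > \<epsilon>} \<le> ennreal \<delta>"
          by (simp add: emeasure_eq_measure bad_def ennreal_leI)
      qed
      also have "\<dots> < y" using \<delta>b b by simp
      finally show "(SUP f\<in>H. emeasure (\<mu> i) {x. \<bar>f x - integral\<^sup>L (\<mu> i) f\<bar> > \<epsilon>}) < y" .
    qed
  qed
qed

end
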